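(* Consider the model and the two-stage decision procedure described in the context, and let $W(\gamma_t,p_t)=\sup\{P_{\mathrm e}(\gamma_t,p_t,\mathbf t,P_{\mathrm{FA,M}},P_{\mathrm{MD,M}}):\ \mathbf t\in\{0,1\}^N,\ \sum_i(1-t_i)\le\bar mN,\ P_{\mathrm{FA,M}},P_{\mathrm{MD,M}}\in[0,1]\}$. Let $\Gamma_t=\{p_\alpha(a\mid1)/p_\alpha(a\mid0): a\in\mathcal A\}$. Then the minimal value of $W(\gamma_t,p_t)$ over $\gamma_t>0$, $p_t\in[0,1]$ can be achieved with $\gamma_t\in\Gamma_t$; that is, $\inf_{\gamma_t>0,\,p_t\in[0,1]}W(\gamma_t,p_t)=\inf_{\gamma_t\in\Gamma_t,\,p_t\in[0,1]}W(\gamma_t,p_t)$.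
   Context: There are $N$ robots indexed by $i\in\{1,\dots,N\}$ and $\bar m\in[0,1]$ is a known upper bound on the proportion of malicious robots. A binary event $\Xi\in\{0,1\}$ has prior probabilities $\Pr(\Xi=0),\Pr(\Xi=1)>0$; $\mathcal H_0$ means $\Xi=0$, $\mathcal H_1$ means $\Xi=1$. An unknown deterministic trust vector $\mathbf t\in\{0,1\}^N$ indicates legitimate ($t_i=1$) or malicious ($t_i=0$) robots. Given $\Xi$ and $\mathbf t$, the measurements $Y_i\in\{0,1\}$ are independent with $\Pr(Y_i=1\mid\Xi=0)=P_{\mathrm{FA,L}}$, $\Pr(Y_i=0\mid\Xi=1)=P_{\mathrm{MD,L}}$ if $t_i=1$ and $\Pr(Y_i=1\mid\Xi=0)=P_{\mathrm{FA,M}}$, $\Pr(Y_i=0\mid\Xi=1)=P_{\mathrm{MD,M}}$ if $t_i=0$, where $P_{\mathrm{FA,L}},P_{\mathrm{MD,L}}\in(0,0.5)$ and $P_{\mathrm{FA,M}},P_{\mathrm{MD,M}}\in[0,1]$. Trust values $\alpha_i$ take values in a finite set $\mathcal A$; given $\mathbf t$ they are independent with pmf $p_\alpha(\cdot\mid t_i)$, independent of $\Xi$ and the measurements; $p_\alpha(a\mid0)p_\alpha(a\mid1)\notin\{0,1\}$ for all $a\in\mathcal A$. Two-stage procedure with parameters $\gamma_t>0$, $p_t\in[0,1]$: $\hat t_i=1$ if $p_\alpha(\alpha_i\mid1)/p_\alpha(\alpha_i\mid0)>\gamma_t$, $\hat t_i=0$ if it is $<\gamma_t$, and on equality $\hat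 t_i=1$ with probability $p_t$ (independently), else $0$. With $\gamma_{\mathrm{TS}}=\log(\Pr(\Xi=0)/\Pr(\Xi=1))$, $w_1=\log\frac{1-P_{\mathrm{MD,L}}}{P_{\mathrm{FA,L}}}$, $w_0=\log\frac{1-P_{\mathrm{FA,L}}}{P_{\mathrm{MD,L}}}$, $S_N=\sum_i\hat t_i[w_1Y_i-w_0(1-Y_i)]$, define $P_{\mathrm{FA}}=\Pr(S_N\ge\gamma_{\mathrm{TS}}\mid\mathcal H_0)$, $P_{\mathrm{MD}}=\Pr(S_N<\gamma_{\mathrm{TS}}\mid\mathcal H_1)$ and $P_{\mathrm e}(\gamma_t,p_t,\mathbf t,P_{\mathrm{FA,M}},P_{\mathrm{MD,M}})=\Pr(\Xi=0)P_{\mathrm{FA}}+\Pr(\Xi=1)P_{\mathrm{MD}}$. *)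

theory Defs
  imports "HOL-Library.FuncSet" Complex_Main
begin

text \<open>Binary vectors of length N are functions in PiE {..<N} (\<lambda>_. UNIV);
  robot i corresponds to index i-1. Boolean True encodes 1, False encodes 0.\<close>

definition binvecs :: "nat \<Rightarrow> (nat \<Rightarrow> bool) set" where
  "binvecs N = Pi\<^sub>E {..<N} (\<lambda>_. UNIV)"

definition bern :: "real \<Rightarrow> bool \<Rightarrow> real" where
  "bern p b = (if b then p else 1 - p)"

text \<open>Likelihood ratio of a trust value a: p_alpha(a|1)/p_alpha(a|0).
  pa a s is p_alpha(a | t_i = s).\<close>
definition lratio :: "('a \<Rightarrow> bool \<Rightarrow> real) \<Rightarrow> 'a \<Rightarrow> real" where
  "lratio pa a = pa a True / pa a False"

text \<open>Probability that hat t_i = 1 given t_i = s, for parameters gamma_t, p_t.\<close>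
definition qhat :: "'a set \<Rightarrow> ('a \<Rightarrow> bool \<Rightarrow> real) \<Rightarrow> real \<Rightarrow> real \<Rightarrow> bool \<Rightarrow> real" where
  "qhat A pa gt pt s =
     (\<Sum>a\<in>A. pa a s * (if lratio pa a > gt then 1 else if lratio pa a = gt then pt else 0))"

text \<open>Probability that Y_i = 1 given Xi = xi and t_i = s.\<close>
definition pY1 :: "real \<Rightarrow> real \<Rightarrow> real \<Rightarrow> real \<Rightarrow> bool \<Rightarrow> bool \<Rightarrow> real" where
  "pY1 PFAL PMDL PFAM PMDM xi s =
     (if xi then (if s then 1 - PMDL else 1 - PMDM) else (if s then PFAL else PFAM))"

definition w1 :: "real \<Rightarrow> real \<Rightarrow> real" where
  "w1 PFAL PMDL = ln ((1 - PMDL) / PFAL)"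
definition w0 :: "real \<Rightarrow> real \<Rightarrow> real" where
  "w0 PFAL PMDL = ln ((1 - PFAL) / PMDL)"

text \<open>Test statistic S_N for realisations th (of hat t) and y (of Y).\<close>
definition SN :: "nat \<Rightarrow> real \<Rightarrow> real \<Rightarrow> (nat \<Rightarrow> bool) \<Rightarrow> (nat \<Rightarrow> bool) \<Rightarrow> real" where
  "SN N PFAL PMDL th y =
     (\<Sum>i<N. (if th i then 1 else 0) * (if y i then w1 PFAL PMDL else - w0 PFAL PMDL))"

text \<open>Joint probability of (hat t, Y) = (th, y) given Xi = xi and trust vector t.\<close>
definition jointp :: "nat \<Rightarrow> 'a set \<Rightarrow> ('a \<Rightarrow> bool \<Rightarrow> real) \<Rightarrow> real \<Rightarrow> real \<Rightarrow> real \<Rightarrow> real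
   \<Rightarrow> real \<Rightarrow> real \<Rightarrow> (nat \<Rightarrow> bool) \<Rightarrow> bool \<Rightarrow> (nat \<Rightarrow> bool) \<Rightarrow> (nat \<Rightarrow> bool) \<Rightarrow> real" where
  "jointp N A pa PFAL PMDL PFAM PMDM gt pt t xi th y =
     (\<Prod>i<N. bern (qhat A pa gt pt (t i)) (th i) * bern (pY1 PFAL PMDL PFAM PMDM xi (t i)) (y i))"

text \<open>Error probability P_e(gamma_t, p_t, t, P_FA,M, P_MD,M); pi0 = Pr(Xi = 0).\<close>
definition Pe :: "nat \<Rightarrow> 'a set \<Rightarrow> ('a \<Rightarrow> bool \<Rightarrow> real) \<Rightarrow> real \<Rightarrow> real \<Rightarrow> real
   \<Rightarrow> real \<Rightarrow> real \<Rightarrow> (nat \<Rightarrow> bool) \<Rightarrow> real \<Rightarrow> real \<Rightarrow> real" where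
  "Pe N A pa pi0 PFAL PMDL gt pt t PFAM PMDM =
     (let gTS = ln (pi0 / (1 - pi0));
          PFA = (\<Sum>th\<in>binvecs N. \<Sum>y\<in>binvecs N.
                   (if SN N PFAL PMDL th y \<ge> gTS
                    then jointp N A pa PFAL PMDL PFAM PMDM gt pt t False th y else 0));
          PMD = (\<Sum>th\<in>binvecs N. \<Sum>y\<in>binvecs N.
                   (if SN N PFAL PMDL th y < gTS
                    then jointp N A pa PFAL PMDL PFAM PMDM gt pt t True th y else 0))
      in pi0 * PFA + (1 - pi0) * PMD)"

definition Wc :: "nat \<Rightarrow> real \<Rightarrow> 'a set \<Rightarrow> ('a \<Rightarrow> bool \<Rightarrow> real) \<Rightarrow> real \<Rightarrow> real \<Rightarrow> real
   \<Rightarrow> real \<Rightarrow> real \<Rightarrow> real" where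
  "Wc N mbar A pa pi0 PFAL PMDL gt pt =
     Sup {Pe N A pa pi0 PFAL PMDL gt pt t PFAM PMDM | t PFAM PMDM.
            t \<in> binvecs N \<and> real (card {i. i < N \<and> \<not> t i}) \<le> mbar * real N \<and>
            PFAM \<in> {0..1} \<and> PMDM \<in> {0..1}}"

end

theory Submission
  imports Defs
begin

lemma Wc_cong:
  assumes "qhat A pa g pt = qhat A pa g' pt'"
  shows "Wc N mbar A pa pi0 PFAL PMDL g pt = Wc N mbar A pa pi0 PFAL PMDL g' pt'"
  unfolding Wc_def Pe_def jointp_def assms ..

lemma qhat_cong:
  assumes "\<And>a. a \<in> A \<Longrightarrow>
    (if lratio pa a > g then 1 else if lratio pa a = g then pt else 0) =
    (if lratio pa a > g' then 1 else if lratio pa a = g' then pt' else (0::real))"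
  shows "qhat A pa g pt = qhat A pa g' pt'"
  unfolding qhat_def using assms by (intro ext sum.cong) auto

lemma reduce:
  fixes g pt :: real
  assumes "finite A" "A \<noteq> {}" "pt \<in> {0..1}"
  shows "\<exists>a\<in>A. \<exists>p\<in>{0..1}. qhat A pa g pt = qhat A pa (lratio pa a) p"
proof -
  let ?G = "lratio pa ` A"
  have fG: "finite ?G" "?G \<noteq> {}" using assms by auto
  show ?thesis
  proof (cases "g \<in> ?G")
    case True
    then obtain a where a: "a \<in> A" "g = lratio pa a" by auto
    show ?thesis using a assms(3) by blast
  next
    case notin: False
    show ?thesis
    proof (cases "{x\<in>?G. x > g} = {}")
      case True
      define m where "m = Max ?G"
      have "m \<in> ?G" using fG m_def by auto
      then obtain a where a: "a \<in> A" "m = lratio pa a" by auto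
      have "\<forall>b\<in>A. lratio pa b \<le> m" using fG m_def by auto
      hence "qhat A pa g pt = qhat A pa m 0"
        using True notin by (intro qhat_cong) force
      thus ?thesis using a by force
    next
      case False
      define m where "m = Min {x\<in>?G. x > g}"
      have fU: "finite {x\<in>?G. x > g}" using fG by auto
      have "m \<in> {x\<in>?G. x > g}" using fU False m_def by (metis Min_in)
      then obtain a where a: "a \<in> A" "m = lratio pa a" "m > g" by auto
      have mn: "\<forall>b\<in>A. lratio pa b > g \<longrightarrow> m \<le> lratio pa b" using fU m_def by auto
      have "qhat A pa g pt = qhat A pa m 1"
      proof (rule qhat_cong)
        fix b assume b: "b \<in> A"
        have "lratio pa b \<noteq> g" using notin b by auto
        thus "(if lratio pa b > g then 1 else if lratio pa b = g then pt else 0) =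
          (if lratio pa b > m then 1 else if lratio pa b = m then 1 else (0::real))"
          using mn b a(3) by force
      qed
      thus ?thesis using a by force
    qed
  qed
qed

theorem lemma3:
  fixes N :: nat and mbar pi0 PFAL PMDL :: real
    and A :: "'a set" and pa :: "'a \<Rightarrow> bool \<Rightarrow> real"
  assumes "mbar \<in> {0..1}"
    and "0 < pi0" and "pi0 < 1"
    and "0 < PFAL" and "PFAL < 1/2" and "0 < PMDL" and "PMDL < 1/2"
    and "finite A" and "A \<noteq> {}"
    and "\<And>a s. a \<in> A \<Longrightarrow> pa a s \<ge> 0"
    and "\<And>s. (\<Sum>a\<in>A. pa a s) = 1"
    and "\<And>a. a \<in> A \<Longrightarrow> pa a False * pa a True \<notin> {0, 1}"
  shows "(INF gp \<in> {0<..} \<times> {0..1}. Wc N mbar A pa pi0 PFAL PMDL (fst gp) (snd gp))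
       = (INF gp \<in> (lratio pa ` A) \<times> {0..1}. Wc N mbar A pa pi0 PFAL PMDL (fst gp) (snd gp))"
proof -
  let ?f = "\<lambda>gp. Wc N mbar A pa pi0 PFAL PMDL (fst gp) (snd gp)"
  have pos: "lratio pa a > 0" if "a \<in> A" for a
  proof -
    have "pa a False \<noteq> 0" "pa a True \<noteq> 0" using assms(12)[OF that] by auto
    moreover have "pa a False \<ge> 0" "pa a True \<ge> 0" using assms(10)[OF that] by auto
    ultimately show ?thesis unfolding lratio_def by simp
  qed
  have sub: "(lratio pa ` A) \<times> {0..1} \<subseteq> {0<..} \<times> {0..1::real}" using pos by auto
  have "?f ` ({0<..} \<times> {0..1}) \<subseteq> ?f ` ((lratio pa ` A) \<times> {0..1})"
  proof
    fix w assume "w \<in> ?f ` ({0<..} \<times> {0..1})"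
    then obtain g p where w: "w = ?f (g, p)" and p: "p \<in> {0..1}" by auto
    obtain a p' where ap: "a \<in> A" "p' \<in> {0..1}" "qhat A pa g p = qhat A pa (lratio pa a) p'"
      using reduce[OF assms(8,9) p] by blast
    have "w = ?f (lratio pa a, p')" using w Wc_cong[OF ap(3)] by simp
    thus "w \<in> ?f ` ((lratio pa ` A) \<times> {0..1})" using ap
      by (intro image_eqI[where x="(lratio pa a, p')"]) auto
  qed
  hence "?f ` ({0<..} \<times> {0..1}) = ?f ` ((lratio pa ` A) \<times> {0..1})" using sub by blast
  thus ?thesis by simp
qed

end
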